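(* Let $G=(V,E)$ be a connected undirected unweighted graph on $n$ nodes, let $S\subseteq V$, and let $\delta\geq 1$ be a real number. Then the expected absorption time of the positional Voter process on $G$ with biased set $S$ and bias $\delta$ satisfies $\operatorname{T}(G^S,\delta)\leq n^5$.
   Context: Positional Voter model. A graph $G=(V,E,w)$ has node set $V$ with $|V|=n$, edge set $E\subseteq V\times V$ and weights $w\colon E\to\mathbb{R}_{>0}$; $\operatorname{in}(u)=\{v\in V:(v,u)\in E\}$. "Undirected unweighted" means $E$ is symmetric and $w\equiv 1$. A configuration is a set $X\subseteq V$ (the nodes carrying the novel trait $A$; the others carry trait $B$). Given a biased set $S\subseteq V$ and bias $\delta\ge 0$, define $f^S_X(v\mid u)=1+\delta$ if $v\in X$ and $u\in S$, and $f^S_X(v\mid u)=1$ otherwise. The process $(\mathcal{X}_t)_{t\ge0}$ evolves as follows: given $\mathcal{X}_t=X$, a node $u$ is chosen uniformly at random from $V$, then a node $v\in\operatorname{in}(u)$ is chosen with probability $\frac{f^S_X(v\mid u)\,w(v,u)}{\sum_{x\in\operatorname{in}(u)} f^S_X(x\mid u)\,w(x,u)}$, and $u$ adopts the trait of $v$, i.e. $\mathcal{X}_{t+1}=X\cup\{u\}$ if $v\in X$ and $\mathcal{X}_{t+1}=X\setminus\{u\}$ otherwise. Unless stated otherwise, $\mathcal{X}_0=\{u\}$ with $u$ uniformly random in $V$. The absorption time is the first $t$ with $\mathcal{X}_t\in\{\emptyset,V\}$, and $\operatorname{T}(G^S,\delta)$ denotes its expectation. *)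

theory Defs
  imports "HOL-Probability.Probability"
begin

definition in_nbrs :: "('a \<times> 'a) set \<Rightarrow> 'a \<Rightarrow> 'a set" where
  "in_nbrs E u = {v. (v, u) \<in> E}"

definition pv_fit :: "'a set \<Rightarrow> real \<Rightarrow> 'a set \<Rightarrow> 'a \<Rightarrow> 'a \<Rightarrow> real" where
  "pv_fit S \<delta> X v u = (if v \<in> X \<and> u \<in> S then 1 + \<delta> else 1)"

definition pv_pick :: "('a \<times> 'a) set \<Rightarrow> ('a \<times> 'a \<Rightarrow> real) \<Rightarrow> 'a set \<Rightarrow> real
    \<Rightarrow> 'a set \<Rightarrow> 'a \<Rightarrow> 'a pmf" where
  "pv_pick E w S \<delta> X u = embed_pmf (\<lambda>v. if v \<in> in_nbrs E u
      then pv_fit S \<delta> X v u * w (v, u) / (\<Sum>x\<in>in_nbrs E u. pv_fit S \<delta> X x u * w (x, u))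
      else 0)"

definition pv_step :: "'a set \<Rightarrow> ('a \<times> 'a) set \<Rightarrow> ('a \<times> 'a \<Rightarrow> real) \<Rightarrow> 'a set \<Rightarrow> real
    \<Rightarrow> 'a set \<Rightarrow> 'a set pmf" where
  "pv_step V E w S \<delta> X =
     (if X = {} \<or> X = V then return_pmf X
      else bind_pmf (pmf_of_set V) (\<lambda>u.
             map_pmf (\<lambda>v. if v \<in> X then insert u X else X - {u}) (pv_pick E w S \<delta> X u)))"

definition pv_dist :: "'a set \<Rightarrow> ('a \<times> 'a) set \<Rightarrow> ('a \<times> 'a \<Rightarrow> real) \<Rightarrow> 'a set \<Rightarrow> real
    \<Rightarrow> nat \<Rightarrow> 'a set pmf" where
  "pv_dist V E w S \<delta> t =
     ((\<lambda>p. bind_pmf p (pv_step V E w S \<delta>)) ^^ t) (map_pmf (\<lambda>u. {u}) (pmf_of_set V))"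

text \<open>Expected absorption time T(G^S, delta) = sum over t of P(tau > t) = P(X_t not absorbed).\<close>
definition pv_absorption_time :: "'a set \<Rightarrow> ('a \<times> 'a) set \<Rightarrow> ('a \<times> 'a \<Rightarrow> real) \<Rightarrow> 'a set
    \<Rightarrow> real \<Rightarrow> ennreal" where
  "pv_absorption_time V E w S \<delta> =
     (\<Sum>t. ennreal (measure_pmf.prob (pv_dist V E w S \<delta> t) {X. X \<noteq> {} \<and> X \<noteq> V}))"

end

theory Submission
  imports Defs
begin

lemma integral_bind_pmf_fin:
  fixes h :: "'b \<Rightarrow> real"
  assumes A: "finite A" "set_pmf p \<subseteq> A" and B: "finite B" "\<And>x. x \<in> set_pmf p \<Longrightarrow> set_pmf (f x) \<subseteq> B"
  shows "measure_pmf.expectation (bind_pmf p f) h = measure_pmf.expectation p (\<lambda>x. measure_pmf.expectation (f x) h)"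
proof -
  have s: "set_pmf (bind_pmf p f) \<subseteq> B" using B by auto
  have "measure_pmf.expectation (bind_pmf p f) h = (\<Sum>y\<in>B. h y * pmf (bind_pmf p f) y)"
    using s by (intro integral_measure_pmf_real) (auto simp: B)
  also have "\<dots> = (\<Sum>y\<in>B. h y * (\<Sum>x\<in>A. pmf (f x) y * pmf p x))"
  proof (intro sum.cong refl arg_cong2[where f="(*)"])
    fix y show "pmf (bind_pmf p f) y = (\<Sum>x\<in>A. pmf (f x) y * pmf p x)"
      unfolding pmf_bind using A by (intro integral_measure_pmf_real) auto
  qed
  also have "\<dots> = (\<Sum>x\<in>A. pmf p x * (\<Sum>y\<in>B. h y * pmf (f x) y))"
    by (simp add: sum_distrib_left sum_distrib_right sum.swap[of _ A] mult_ac)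
  also have "\<dots> = (\<Sum>x\<in>A. measure_pmf.expectation (f x) h * pmf p x)"
  proof (intro sum.cong refl)
    fix x assume "x \<in> A"
    show "pmf p x * (\<Sum>y\<in>B. h y * pmf (f x) y) = measure_pmf.expectation (f x) h * pmf p x"
    proof (cases "x \<in> set_pmf p")
      case True
      then have "measure_pmf.expectation (f x) h = (\<Sum>y\<in>B. h y * pmf (f x) y)"
        using B by (intro integral_measure_pmf_real) auto
      then show ?thesis by simp
    next
      case False then show ?thesis by (simp add: set_pmf_iff)
    qed
  qed
  also have "\<dots> = measure_pmf.expectation p (\<lambda>x. measure_pmf.expectation (f x) h)"
    using A by (intro integral_measure_pmf_real[symmetric]) auto
  finally show ?thesis .
qed

lemma drift_bound:
  fixes step :: "'s \<Rightarrow> 's pmf" and h :: "'s \<Rightarrow> real"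
  assumes P: "finite P"
    and stepP: "\<And>x. x \<in> P \<Longrightarrow> set_pmf (step x) \<subseteq> P"
    and hnn: "\<And>x. x \<in> P \<Longrightarrow> 0 \<le> h x"
    and absorb: "\<And>x. x \<in> P \<Longrightarrow> x \<notin> N \<Longrightarrow> step x = return_pmf x"
    and drift: "\<And>x. x \<in> P \<Longrightarrow> x \<in> N \<Longrightarrow> measure_pmf.expectation (step x) h \<le> h x - 1"
    and p0: "set_pmf p0 \<subseteq> P"
  shows "(\<Sum>t. ennreal (measure_pmf.prob (((\<lambda>p. bind_pmf p step) ^^ t) p0) N))
           \<le> ennreal (measure_pmf.expectation p0 h)"
proof -
  define pt where "pt t = ((\<lambda>p. bind_pmf p step) ^^ t) p0" for t
  have pt_Suc: "pt (Suc t) = bind_pmf (pt t) step" for t by (simp add: pt_def)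
  have pt0: "pt 0 = p0" by (simp add: pt_def)
  have supp: "set_pmf (pt t) \<subseteq> P" for t
  proof (induction t)
    case 0 then show ?case using p0 pt0 by simp
  next
    case (Suc t) then show ?case using stepP by (auto simp: pt_Suc)
  qed
  have fin: "finite (set_pmf (pt t))" for t using supp P finite_subset by blast
  have key: "measure_pmf.expectation (pt (Suc t)) h
      \<le> measure_pmf.expectation (pt t) h - measure_pmf.prob (pt t) N" for t
  proof -
    have "measure_pmf.expectation (pt (Suc t)) h
        = measure_pmf.expectation (pt t) (\<lambda>x. measure_pmf.expectation (step x) h)"
      unfolding pt_Suc using supp P stepP by (intro integral_bind_pmf_fin[where A=P and B=P]) auto
    also have "\<dots> \<le> measure_pmf.expectation (pt t) (\<lambda>x. h x - indicator N x)"
    proof (intro integral_mono_AE integrable_measure_pmf_finite[OF fin])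
      show "AE x in measure_pmf (pt t). measure_pmf.expectation (step x) h \<le> h x - indicator N x"
        unfolding AE_measure_pmf_iff
      proof
        fix x assume "x \<in> set_pmf (pt t)"
        then have x: "x \<in> P" using supp by auto
        show "measure_pmf.expectation (step x) h \<le> h x - indicator N x"
        proof (cases "x \<in> N")
          case True then show ?thesis using drift[OF x] by simp
        next
          case False then show ?thesis using absorb[OF x] by (simp add: expectation_return_pmf)
        qed
      qed
    qed
    also have "\<dots> = measure_pmf.expectation (pt t) h - measure_pmf.prob (pt t) N"
      by (subst Bochner_Integration.integral_diff)
         (auto intro: integrable_measure_pmf_finite[OF fin] simp: integral_indicator)
    finally show ?thesis .
  qed
  have nn: "0 \<le> measure_pmf.expectation (pt T) h" for T
    by (intro integral_nonneg_AE) (use supp hnn in \<open>auto simp: AE_measure_pmf_iff\<close>)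
  have tele: "(\<Sum>t<T. measure_pmf.prob (pt t) N) + measure_pmf.expectation (pt T) h
      \<le> measure_pmf.expectation p0 h" for T
  proof (induction T)
    case 0 then show ?case by (simp add: pt0)
  next
    case (Suc T) then show ?case using key[of T] by simp
  qed
  have part: "(\<Sum>t<T. measure_pmf.prob (pt t) N) \<le> measure_pmf.expectation p0 h" for T
    using tele[of T] nn[of T] by linarith
  show ?thesis
    unfolding pt_def[symmetric]
  proof (intro suminf_le_const[OF summableI])
    fix T
    have "(\<Sum>t<T. ennreal (measure_pmf.prob (pt t) N)) = ennreal (\<Sum>t<T. measure_pmf.prob (pt t) N)"
      by (intro sum_ennreal) simp
    also have "\<dots> \<le> ennreal (measure_pmf.expectation p0 h)" using part by (intro ennreal_leI) 
    finally show "(\<Sum>t<T. ennreal (measure_pmf.prob (pt t) N)) \<le> ennreal (measure_pmf.expectation p0 h)" .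
  qed
qed


lemma ineq_out:
  fixes F a b p :: real
  assumes "F \<ge> 1" "a \<ge> 0" "b \<ge> 0" "a + b > 0" "p \<ge> 0"
  shows "(p + (a+b))^2 * (F*a) / (F*a+b) + p^2 * b / (F*a+b) \<ge> p^2 + 2*p*a + a*(a+b)"
proof -
  have "F*a \<ge> a" using assms mult_right_mono[of 1 F a] by simp
  then have W: "F*a + b > 0" using assms by linarith
  have id: "((p + (a+b))^2 * (F*a) + p^2 * b) - (p^2 + 2*p*a + a*(a+b)) * (F*a+b) = (2*p+(a+b))*(a*b*(F-1))"
    by algebra
  have "(2*p+(a+b))*(a*b*(F-1)) \<ge> 0" using assms by simp
  then have "(p^2 + 2*p*a + a*(a+b)) \<le> ((p + (a+b))^2 * (F*a) + p^2 * b) / (F*a+b)"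
    using W id by (simp add: le_divide_eq)
  then show ?thesis by (simp add: add_divide_distrib)
qed

lemma ineq_in:
  fixes F a b p :: real
  assumes "F \<ge> 1" "a \<ge> 0" "b \<ge> 0" "a + b > 0" "p \<ge> 0"
  shows "p^2 * (F*a) / (F*a+b) + (p - (a+b))^2 * b / (F*a+b) \<ge> p^2 - 2*p*b"
proof -
  have "F*a \<ge> a" using assms mult_right_mono[of 1 F a] by simp
  then have W: "F*a + b > 0" using assms by linarith
  have id: "(p^2 * (F*a) + (p - (a+b))^2 * b) - (p^2 - 2*p*b) * (F*a+b) = b*(a+b)^2 + 2*p*b*((F-1)*a)"
    by algebra
  have "b*(a+b)^2 + 2*p*b*((F-1)*a) \<ge> 0" using assms by simp
  then have "p^2 - 2*p*b \<le> (p^2 * (F*a) + (p - (a+b))^2 * b) / (F*a+b)"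
    using W id by (simp add: le_divide_eq)
  then show ?thesis by (simp add: add_divide_distrib)
qed

lemma cross_edge: "(x,y) \<in> E\<^sup>* \<Longrightarrow> x \<in> X \<Longrightarrow> y \<notin> X \<Longrightarrow> \<exists>p q. (p,q) \<in> E \<and> p \<in> X \<and> q \<notin> X"
  by (induction rule: rtrancl_induct) blast+

lemma has_in_nbr: "(w,u) \<in> E\<^sup>* \<Longrightarrow> w \<noteq> u \<Longrightarrow> \<exists>z. (z,u) \<in> E"
  by (erule rtranclE) auto

lemma cut_eq:
  assumes fV: "finite V" and EV: "E \<subseteq> V \<times> V" and symE: "sym E" and XV: "X \<subseteq> V"
  shows "(\<Sum>u\<in>V-X. card (in_nbrs E u \<inter> X)) = (\<Sum>u\<in>X. card (in_nbrs E u - X))"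
proof -
  have fin: "finite (in_nbrs E u)" for u
    by (rule finite_subset[of _ V]) (use EV fV in \<open>auto simp: in_nbrs_def\<close>)
  have finX: "finite X" using XV fV finite_subset by blast
  have "(\<Sum>u\<in>V-X. card (in_nbrs E u \<inter> X)) = card (SIGMA u:V-X. in_nbrs E u \<inter> X)"
    by (rule card_SigmaI[symmetric]) (auto simp: fin fV)
  also have "\<dots> = card (prod.swap ` (SIGMA u:V-X. in_nbrs E u \<inter> X))"
    by (rule card_image[symmetric]) (rule inj_on_inverseI[where g=prod.swap], simp)
  also have "prod.swap ` (SIGMA u:V-X. in_nbrs E u \<inter> X) = (SIGMA u:X. in_nbrs E u - X)"
  proof
    show "prod.swap ` (SIGMA u:V-X. in_nbrs E u \<inter> X) \<subseteq> (SIGMA u:X. in_nbrs E u - X)"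
    proof
      fix z assume "z \<in> prod.swap ` (SIGMA u:V-X. in_nbrs E u \<inter> X)"
      then obtain u v where z: "z = (v,u)" "u \<in> V" "u \<notin> X" "(v,u) \<in> E" "v \<in> X"
        by (auto simp: in_nbrs_def)
      then have "(u,v) \<in> E" using symE by (simp add: sym_def)
      then show "z \<in> (SIGMA u:X. in_nbrs E u - X)" using z by (simp add: in_nbrs_def)
    qed
    show "(SIGMA u:X. in_nbrs E u - X) \<subseteq> prod.swap ` (SIGMA u:V-X. in_nbrs E u \<inter> X)"
    proof
      fix z assume "z \<in> (SIGMA u:X. in_nbrs E u - X)"
      then obtain u v where z: "z = (u,v)" "u \<in> X" "(v,u) \<in> E" "v \<notin> X" by (auto simp: in_nbrs_def)
      then have "(u,v) \<in> E" using symE by (auto simp: sym_def)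
      then have "v \<in> V" using EV by auto
      show "z \<in> prod.swap ` (SIGMA u:V-X. in_nbrs E u \<inter> X)"
      proof (rule rev_image_eqI)
        show "(v,u) \<in> (SIGMA u:V-X. in_nbrs E u \<inter> X)" using z \<open>v \<in> V\<close> \<open>(u,v) \<in> E\<close> by (simp add: in_nbrs_def)
        show "z = prod.swap (v,u)" using z by simp
      qed
    qed
  qed
  also have "card (SIGMA u:X. in_nbrs E u - X) = (\<Sum>u\<in>X. card (in_nbrs E u - X))"
    by (rule card_SigmaI) (auto simp: fin finX)
  finally show ?thesis .
qed

lemma pick_pmf:
  assumes fin: "finite (in_nbrs E u)" and ne: "in_nbrs E u \<noteq> {}" and \<delta>: "\<delta> \<ge> 0"
  shows "pmf (pv_pick E (\<lambda>_. 1) S \<delta> X u) v =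
     (if v \<in> in_nbrs E u then pv_fit S \<delta> X v u / (\<Sum>x\<in>in_nbrs E u. pv_fit S \<delta> X x u) else 0)"
proof -
  define W where "W = (\<Sum>x\<in>in_nbrs E u. pv_fit S \<delta> X x u)"
  have fpos: "pv_fit S \<delta> X x u > 0" for x using \<delta> by (simp add: pv_fit_def)
  have Wpos: "W > 0" unfolding W_def using fin ne fpos by (intro sum_pos) auto
  define f where "f v = (if v \<in> in_nbrs E u then pv_fit S \<delta> X v u / W else 0)" for v
  have nn: "0 \<le> f x" for x using fpos Wpos by (simp add: f_def less_imp_le)
  have "(\<integral>\<^sup>+x. ennreal (f x) \<partial>count_space UNIV) = (\<Sum>x\<in>in_nbrs E u. ennreal (f x))"
    by (rule nn_integral_count_space') (auto simp: fin f_def)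
  also have "\<dots> = ennreal (\<Sum>x\<in>in_nbrs E u. f x)" using nn by (intro sum_ennreal) auto
  also have "(\<Sum>x\<in>in_nbrs E u. f x) = (\<Sum>x\<in>in_nbrs E u. pv_fit S \<delta> X x u / W)"
    by (intro sum.cong) (auto simp: f_def)
  also have "\<dots> = 1" using Wpos by (simp add: sum_divide_distrib[symmetric] W_def)
  finally have one: "(\<integral>\<^sup>+x. ennreal (f x) \<partial>count_space UNIV) = 1" by simp
  have "pv_pick E (\<lambda>_. 1) S \<delta> X u = embed_pmf f" unfolding pv_pick_def f_def[abs_def] W_def by (rule arg_cong[where f=embed_pmf]) (simp add: fun_eq_iff)
  moreover have "pmf (embed_pmf f) v = f v" by (rule pmf_embed_pmf[OF nn one])
  ultimately show ?thesis by (simp add: f_def W_def)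
qed


lemma step_drift:
  fixes V :: "'a set" and E :: "('a \<times> 'a) set" and S :: "'a set" and \<delta> :: real and X :: "'a set" and K :: real
  assumes fV: "finite V" and EV: "E \<subseteq> V \<times> V" and symE: "sym E"
    and conn: "\<forall>u\<in>V. \<forall>v\<in>V. (u, v) \<in> E\<^sup>*" and \<delta>: "\<delta> \<ge> 0"
    and XV: "X \<subseteq> V" and ne: "X \<noteq> {}" and nV: "X \<noteq> V"
  shows "measure_pmf.expectation (pv_step V E (\<lambda>_. 1) S \<delta> X)
      (\<lambda>Y. real (card V) * (K - (\<Sum>v\<in>Y. real (card (in_nbrs E v)))^2))
    \<le> real (card V) * (K - (\<Sum>v\<in>X. real (card (in_nbrs E v)))^2) - 1"
proof -
  define N where "N u = in_nbrs E u" for u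
  define dg where "dg u = real (card (N u))" for u
  define \<phi> where "\<phi> Y = (\<Sum>v\<in>Y. dg v)" for Y
  define n where "n = real (card V)"
  define h where "h Y = n * (K - (\<phi> Y)^2)" for Y
  define G where "G u v = (if v \<in> X then insert u X else X - {u})" for u v
  define pk where "pk u = pv_pick E (\<lambda>_. 1) S \<delta> X u" for u
  define F where "F u = (if u \<in> S then 1 + \<delta> else 1)" for u
  define a where "a u = real (card (N u \<inter> X))" for u
  define b where "b u = real (card (N u - X))" for u
  define W where "W u = (\<Sum>x\<in>N u. pv_fit S \<delta> X x u)" for u
  define c where "c u = (\<Sum>v\<in>N u. (\<phi> (G u v))^2 * pv_fit S \<delta> X v u / W u)" for u
  have NV: "N u \<subseteq> V" for u using EV by (auto simp: N_def in_nbrs_def)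
  have finN: "finite (N u)" for u using NV fV finite_subset by blast
  have finX: "finite X" using XV fV finite_subset by blast
  obtain x0 where x0: "x0 \<in> X" using ne by blast
  obtain y0 where y0: "y0 \<in> V" "y0 \<notin> X" using nV XV by blast
  have x0V: "x0 \<in> V" using x0 XV by blast
  have Vne: "V \<noteq> {}" using x0V by auto
  have npos: "n > 0" using fV Vne by (simp add: n_def card_gt_0_iff)
  have Nne: "N u \<noteq> {}" if u: "u \<in> V" for u
  proof -
    obtain w where w: "w \<in> V" "w \<noteq> u" using x0V y0 x0 by (cases "u = x0") auto
    then have "(w,u) \<in> E\<^sup>*" using conn u by blast
    then obtain z where "(z,u) \<in> E" using w(2) has_in_nbr by metis
    then show ?thesis by (auto simp: N_def in_nbrs_def)
  qed
  have dg_eq: "dg u = a u + b u" for u using card_Int_Diff[OF finN, of u X] by (simp add: dg_def a_def b_def)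
  have W_eq: "W u = F u * a u + b u" for u
  proof -
    have "W u = (\<Sum>x\<in>N u \<inter> X. pv_fit S \<delta> X x u) + (\<Sum>x\<in>N u - X. pv_fit S \<delta> X x u)"
      unfolding W_def using finN by (rule sum.Int_Diff)
    also have "\<dots> = (\<Sum>x\<in>N u \<inter> X. F u) + (\<Sum>x\<in>N u - X. 1)"
      by (intro arg_cong2[where f="(+)"] sum.cong) (auto simp: pv_fit_def F_def)
    finally show ?thesis by (simp add: a_def b_def)
  qed
  have F1: "F u \<ge> 1" for u using \<delta> by (simp add: F_def)
  have a0: "a u \<ge> 0" for u by (simp add: a_def)
  have b0: "b u \<ge> 0" for u by (simp add: b_def)
  have dpos: "a u + b u > 0" if u: "u \<in> V" for u
  proof -
    have "card (N u) > 0" using Nne[OF u] finN[of u] by (simp add: card_gt_0_iff)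
    then show ?thesis using dg_eq[of u] by (simp add: dg_def)
  qed
  have Wpos: "W u > 0" if u: "u \<in> V" for u
  proof -
    have "F u * a u \<ge> a u" using F1[of u] a0[of u] mult_right_mono[of 1 "F u" "a u"] by simp
    then show ?thesis using W_eq[of u] dpos[OF u] by linarith
  qed
  have phi0: "\<phi> Y \<ge> 0" for Y by (simp add: \<phi>_def dg_def sum_nonneg)
  have step_eq: "pv_step V E (\<lambda>_. 1) S \<delta> X = bind_pmf (pmf_of_set V) (\<lambda>u. map_pmf (G u) (pk u))"
    using ne nV by (simp add: pv_step_def G_def[abs_def] pk_def)
  have E1: "measure_pmf.expectation (pv_step V E (\<lambda>_. 1) S \<delta> X) h
      = (\<Sum>u\<in>V. measure_pmf.expectation (pk u) (\<lambda>v. h (G u v))) / n"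
  proof -
    have "measure_pmf.expectation (pv_step V E (\<lambda>_. 1) S \<delta> X) h
        = measure_pmf.expectation (pmf_of_set V) (\<lambda>u. measure_pmf.expectation (map_pmf (G u) (pk u)) h)"
      unfolding step_eq
      by (rule integral_bind_pmf_fin[where A=V and B="Pow V"]) (use fV Vne XV in \<open>auto simp: G_def\<close>)
    then show ?thesis using fV Vne by (simp add: integral_pmf_of_set n_def)
  qed
  have E2: "measure_pmf.expectation (pk u) (\<lambda>v. h (G u v)) = n * K - n * c u" if u: "u \<in> V" for u
  proof -
    have pm: "pmf (pk u) v = (if v \<in> N u then pv_fit S \<delta> X v u / W u else 0)" for v
      unfolding pk_def N_def W_def using finN Nne[OF u] \<delta> by (intro pick_pmf) (auto simp: N_def)
    have "measure_pmf.expectation (pk u) (\<lambda>v. h (G u v)) = (\<Sum>v\<in>N u. h (G u v) * pmf (pk u) v)"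
      by (rule integral_measure_pmf_real) (auto simp: finN pm set_pmf_iff split: if_splits)
    also have "\<dots> = (\<Sum>v\<in>N u. n*K * (pv_fit S \<delta> X v u / W u) - n * ((\<phi> (G u v))^2 * pv_fit S \<delta> X v u / W u))"
      by (intro sum.cong refl) (simp add: pm h_def algebra_simps)
    also have "\<dots> = n*K * (\<Sum>v\<in>N u. pv_fit S \<delta> X v u / W u) - n * c u"
      by (simp add: sum_subtractf sum_distrib_left c_def)
    also have "(\<Sum>v\<in>N u. pv_fit S \<delta> X v u / W u) = 1"
      using Wpos[OF u] by (simp add: sum_divide_distrib[symmetric] W_def)
    finally show ?thesis by simp
  qed
  have cb: "c u \<ge> (\<phi> X)^2 + (if u \<in> X then - 2 * \<phi> X * b u else 2 * \<phi> X * a u + a u * (a u + b u))"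
    if u: "u \<in> V" for u
  proof -
    have c_eq: "c u = (\<phi> (insert u X))^2 * (F u * a u) / W u + (\<phi> (X - {u}))^2 * b u / W u"
    proof -
      have "c u = (\<Sum>v\<in>N u \<inter> X. (\<phi> (G u v))^2 * pv_fit S \<delta> X v u / W u)
                 + (\<Sum>v\<in>N u - X. (\<phi> (G u v))^2 * pv_fit S \<delta> X v u / W u)"
        unfolding c_def using finN by (rule sum.Int_Diff)
      also have "\<dots> = (\<Sum>v\<in>N u \<inter> X. (\<phi> (insert u X))^2 * F u / W u) + (\<Sum>v\<in>N u - X. (\<phi> (X - {u}))^2 / W u)"
        by (intro arg_cong2[where f="(+)"] sum.cong) (auto simp: pv_fit_def F_def G_def)
      finally show ?thesis by (simp add: a_def b_def mult_ac)
    qed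
    show ?thesis
    proof (cases "u \<in> X")
      case True
      have "\<phi> X = dg u + \<phi> (X - {u})" using sum.remove[OF finX True] by (simp add: \<phi>_def)
      then have r: "\<phi> (X - {u}) = \<phi> X - (a u + b u)" using dg_eq by simp
      have i: "insert u X = X" using True by auto
      show ?thesis using ineq_in[OF F1[of u] a0[of u] b0[of u] dpos[OF u] phi0, of X] c_eq True W_eq r i by simp
    next
      case False
      have r: "\<phi> (insert u X) = \<phi> X + (a u + b u)" using False finX dg_eq by (simp add: \<phi>_def)
      have i: "X - {u} = X" using False by auto
      show ?thesis using ineq_out[OF F1[of u] a0[of u] b0[of u] dpos[OF u] phi0, of X] c_eq False W_eq r i by simp
    qed
  qed
  have cut: "(\<Sum>u\<in>V-X. a u) = (\<Sum>u\<in>X. b u)"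
    using cut_eq[OF fV EV symE XV] unfolding a_def b_def N_def
    by (metis of_nat_sum)
  obtain w where w: "w \<in> V" "w \<notin> X" "a w \<ge> 1"
  proof -
    have "(x0,y0) \<in> E\<^sup>*" using conn x0V y0 by blast
    then obtain p q where pq: "(p,q) \<in> E" "p \<in> X" "q \<notin> X" using cross_edge x0 y0 by metis
    have qV: "q \<in> V" using pq EV by auto
    have "p \<in> N q \<inter> X" using pq by (simp add: N_def in_nbrs_def)
    then have "card (N q \<inter> X) > 0" using finN[of q] by (auto simp: card_gt_0_iff)
    then have "a q \<ge> 1" by (simp add: a_def)
    then show ?thesis using that qV pq by blast
  qed
  have sumc: "(\<Sum>u\<in>V. c u) \<ge> n * (\<phi> X)^2 + 1"
  proof -
    define t where "t u = (if u \<in> X then - 2 * \<phi> X * b u else 2 * \<phi> X * a u + a u * (a u + b u))" for u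
    have "(\<Sum>u\<in>V. c u) \<ge> (\<Sum>u\<in>V. (\<phi> X)^2 + t u)" using cb by (intro sum_mono) (auto simp: t_def)
    moreover have "(\<Sum>u\<in>V. (\<phi> X)^2 + t u) = n * (\<phi> X)^2 + (\<Sum>u\<in>V. t u)"
      by (simp add: sum.distrib n_def)
    moreover have "(\<Sum>u\<in>V. t u) = (\<Sum>u\<in>V-X. t u) + (\<Sum>u\<in>X. t u)"
      by (rule sum.subset_diff[OF XV fV])
    moreover have "(\<Sum>u\<in>V-X. t u) = 2 * \<phi> X * (\<Sum>u\<in>V-X. a u) + (\<Sum>u\<in>V-X. a u * (a u + b u))"
      by (simp add: t_def sum.distrib sum_distrib_left)
    moreover have "(\<Sum>u\<in>X. t u) = - 2 * \<phi> X * (\<Sum>u\<in>X. b u)"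
      by (simp add: t_def sum_distrib_left)
    moreover have "(\<Sum>u\<in>V-X. a u * (a u + b u)) \<ge> a w * (a w + b w)"
      using fV w a0 b0 by (intro member_le_sum) auto
    moreover have "a w * (a w + b w) \<ge> 1"
    proof -
      have "a w + b w \<ge> 1" using w(3) b0[of w] by linarith
      then show ?thesis using w(3) mult_mono[of 1 "a w" 1 "a w + b w"] by simp
    qed
    ultimately show ?thesis using cut by (simp add: algebra_simps)
  qed
  have "measure_pmf.expectation (pv_step V E (\<lambda>_. 1) S \<delta> X) h = (\<Sum>u\<in>V. n * K - n * c u) / n"
    unfolding E1 using E2 by (simp cong: sum.cong)
  also have "\<dots> = n * K - (\<Sum>u\<in>V. c u)"
    proof -
    have "(\<Sum>u\<in>V. n * K - n * c u) = n * (n * K - (\<Sum>u\<in>V. c u))"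
      by (simp add: sum_subtractf sum_distrib_left right_diff_distrib n_def)
    then show ?thesis using npos by simp
  qed
  also have "\<dots> \<le> h X - 1" using sumc by (simp add: h_def algebra_simps)
  finally have fin: "measure_pmf.expectation (pv_step V E (\<lambda>_. 1) S \<delta> X) h \<le> h X - 1" .
  have hh: "h = (\<lambda>Y. real (card V) * (K - (\<Sum>v\<in>Y. real (card (in_nbrs E v)))^2))"
    by (simp add: fun_eq_iff h_def \<phi>_def dg_def N_def n_def)
  show ?thesis using fin unfolding hh .
qed


theorem mainTheorem1:
  fixes V :: "'a set" and E :: "('a \<times> 'a) set" and S :: "'a set" and \<delta> :: real
  assumes "finite V" and "V \<noteq> {}"
    and "E \<subseteq> V \<times> V" and "sym E" and "irrefl E"
    and "\<forall>u\<in>V. \<forall>v\<in>V. (u, v) \<in> E\<^sup>*"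
    and "S \<subseteq> V" and "\<delta> \<ge> 1"
  shows "pv_absorption_time V E (\<lambda>_. 1) S \<delta> \<le> ennreal (real (card V) ^ 5)"
proof -
  have fV: "finite V" and Vne: "V \<noteq> {}" using assms by auto
  define Lt where "Lt = (\<Sum>v\<in>V. real (card (in_nbrs E v)))"
  define h where "h Y = real (card V) * (Lt^2 - (\<Sum>v\<in>Y. real (card (in_nbrs E v)))^2)" for Y
  define p0 where "p0 = map_pmf (\<lambda>u. {u}) (pmf_of_set V)"
  have dgle: "real (card (in_nbrs E v)) \<le> real (card V)" for v
    by (intro of_nat_mono card_mono fV) (use assms(3) in \<open>auto simp: in_nbrs_def\<close>)
  have phile: "(\<Sum>v\<in>Y. real (card (in_nbrs E v))) \<le> Lt" if "Y \<subseteq> V" for Y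
    unfolding Lt_def using that fV by (intro sum_mono2) auto
  have hnn: "0 \<le> h Y" if "Y \<in> Pow V" for Y
  proof -
    have "0 \<le> (\<Sum>v\<in>Y. real (card (in_nbrs E v)))" by (simp add: sum_nonneg)
    then have "(\<Sum>v\<in>Y. real (card (in_nbrs E v)))^2 \<le> Lt^2" using phile that by (intro power_mono) auto
    then show ?thesis by (simp add: h_def)
  qed
  have "pv_absorption_time V E (\<lambda>_. 1) S \<delta> \<le> ennreal (measure_pmf.expectation p0 h)"
    unfolding pv_absorption_time_def pv_dist_def p0_def[symmetric]
  proof (rule drift_bound[where P="Pow V"])
    show "finite (Pow V)" using fV by simp
    show "set_pmf (pv_step V E (\<lambda>_. 1) S \<delta> x) \<subseteq> Pow V" if "x \<in> Pow V" for x
      using that fV Vne by (auto simp: pv_step_def)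
    show "0 \<le> h x" if "x \<in> Pow V" for x using hnn that .
    show "pv_step V E (\<lambda>_. 1) S \<delta> x = return_pmf x" if "x \<in> Pow V" "x \<notin> {X. X \<noteq> {} \<and> X \<noteq> V}" for x
      using that by (auto simp: pv_step_def)
    show "measure_pmf.expectation (pv_step V E (\<lambda>_. 1) S \<delta> x) h \<le> h x - 1"
      if "x \<in> Pow V" "x \<in> {X. X \<noteq> {} \<and> X \<noteq> V}" for x
      unfolding h_def[abs_def] using that assms by (intro step_drift) auto
    show "set_pmf p0 \<subseteq> Pow V" using fV Vne by (auto simp: p0_def)
  qed
  also have "ennreal (measure_pmf.expectation p0 h) \<le> ennreal (real (card V) ^ 5)"
  proof (rule ennreal_leI)
    have Lt_le: "Lt \<le> real (card V) * real (card V)"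
      unfolding Lt_def using sum_bounded_above[of V "\<lambda>v. real (card (in_nbrs E v))" "real (card V)"] dgle
      by simp
    have Lt0: "0 \<le> Lt" by (simp add: Lt_def sum_nonneg)
    have hle: "h {u} \<le> real (card V) ^ 5" for u
    proof -
      have "Lt^2 \<le> (real (card V) * real (card V))^2" using Lt_le Lt0 by (intro power_mono) auto
      moreover have "(real (card V) * real (card V))^2 * real (card V) = real (card V) ^ 5"
        by (simp add: power2_eq_square eval_nat_numeral)
      moreover have "h {u} \<le> real (card V) * Lt^2" unfolding h_def by (intro mult_left_mono) auto
      ultimately show ?thesis
        by (metis (no_types, opaque_lifting) mult.commute mult_left_mono of_nat_0_le_iff order_trans)
    qed
    have "measure_pmf.expectation p0 h = (\<Sum>u\<in>V. h {u}) / real (card V)"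
      using fV Vne by (simp add: p0_def integral_pmf_of_set)
    also have "\<dots> \<le> (real (card V) * real (card V) ^ 5) / real (card V)"
      using sum_bounded_above[of V "\<lambda>u. h {u}" "real (card V) ^ 5"] hle by (intro divide_right_mono) auto
    also have "\<dots> = real (card V) ^ 5" using fV Vne by simp
    finally show "measure_pmf.expectation p0 h \<le> real (card V) ^ 5" .
  qed
  finally show ?thesis .
qed

end
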